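(* Let $n\geq2$ and $\mathrm{Ch}_{3,n}(x)=x_1^3-3x_1(x_2^2+\dots+x_n^2)$. Then \[ \frac{1}{3n-2}\mathrm{Ch}_{3,n}(x)=\frac{n+2}{9n-6}x_1^3+\frac{4}{9n-6}\sum_{i=2}^n\left[-\Big(\frac{x_1+\sqrt3x_i}{2}\Big)^3+\Big(\frac{-x_1+\sqrt3x_i}{2}\Big)^3\right]. \] In particular, the symmetric tensor associated with $\mathrm{Ch}_{3,n}$ is critical in $\mathrm{Sym}^3(\mathbb{R}^n)$.
   Context: Tensors and norms: \begin{itemize} \item The symmetric tensor $A$ associated with a form $p\in P_{d,n}$ satisfies $p(x)=\langle A,x\otimes\cdots\otimes x\rangle_F$, where $\langle\cdot,\cdot\rangle_F$ is the Frobenius inner product. \item The spectral norm is $\|A\|_2=\max_{\|x^{(j)}\|=1}\langle A,x^{(1)}\otimes\cdots\otimes x^{(d)}\rangle_F$. \end{itemize} Generalized gradient (Clarke): for a Lipschitz function $f$ on a Euclidean space, $\partial f(p)$ is the convex hull of all limits of $\nabla f(p_i)$, taken over sequences $p_i\to p$ of differentiability points. A nonzero $A\in\mathrm{Sym}^d(\mathbb{R}^n)$ is critical in $\mathrm{Sym}^d(\mathbb{R}^n)$ if $\lambda A\in\partial g(A/\|A\|_F)$ for some $\lambda\in\mathbb{R}$, where $g$ is the spectral norm as a function on the Euclidean space $(\mathrm{Sym}^d(\mathbb{R}^n),\langle\cdot,\cdot\rangle_F)$. *)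

theory Defs
  imports "HOL-Analysis.Analysis"
begin

text \<open>Order-d tensors on R^n: the index type 'd has d elements, the index type 'n has n
elements; a tensor is a real vector indexed by multi-indices f :: 'd \<Rightarrow> 'n.
The Frobenius inner product is the standard inner product of this Euclidean space.\<close>

type_synonym ('n, 'd) tensor = "real ^ ('d \<Rightarrow> 'n)"

definition sym_tensors :: "('n::finite, 'd::finite) tensor set" where
  "sym_tensors = {A. \<forall>\<pi>::'d \<Rightarrow> 'd. bij \<pi> \<longrightarrow> (\<forall>f. A $ (f \<circ> \<pi>) = A $ f)}"

definition outer_prod :: "('d::finite \<Rightarrow> real ^ 'n::finite) \<Rightarrow> ('n, 'd) tensor" where
  "outer_prod xs = (\<chi> f. \<Prod>j\<in>UNIV. xs j $ f j)"

definition tensor_power :: "real ^ 'n::finite \<Rightarrow> ('n, 'd::finite) tensor" where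
  "tensor_power x = outer_prod (\<lambda>_. x)"

definition spectral_norm :: "('n::finite, 'd::finite) tensor \<Rightarrow> real" where
  "spectral_norm A = Sup {inner A (outer_prod xs) | xs. \<forall>j. norm (xs j) = 1}"

text \<open>Clarke generalized gradient of g on the Euclidean space given by the linear subspace S
(with the inherited inner product): convex hull of all limits of gradients of g at points
of differentiability (within S) converging to p.\<close>
definition clarke_grad_on ::
  "'a::euclidean_space set \<Rightarrow> ('a \<Rightarrow> real) \<Rightarrow> 'a \<Rightarrow> 'a set" where
  "clarke_grad_on S g p = convex hull
     {v. \<exists>ps vs. (\<forall>i. ps i \<in> S \<and> vs i \<in> S \<and>
                        (g has_derivative (\<lambda>h. inner (vs i) h)) (at (ps i) within S))
               \<and> ps \<longlonglongrightarrow> p \<and> vs \<longlonglongrightarrow> v}"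

definition critical_sym :: "('n::finite, 'd::finite) tensor \<Rightarrow> bool" where
  "critical_sym A \<longleftrightarrow> A \<in> sym_tensors \<and> A \<noteq> 0 \<and>
     (\<exists>c::real. c *\<^sub>R A \<in> clarke_grad_on sym_tensors spectral_norm (A /\<^sub>R norm A))"

text \<open>Ch_{3,n}, with the distinguished coordinate i0 playing the role of x_1.\<close>
definition Ch3 :: "'n::finite \<Rightarrow> real ^ 'n \<Rightarrow> real" where
  "Ch3 i0 x = x $ i0 ^ 3 - 3 * x $ i0 * (\<Sum>i\<in>UNIV - {i0}. (x $ i)\<^sup>2)"

end

theory Submission
  imports Defs "HOL-Library.FuncSet"
begin


lemma outer_nth: "outer_prod xs $ f = (\<Prod>j\<in>UNIV. xs j $ f j)"
  by (simp add: outer_prod_def)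

lemma inner_outer:
  fixes us xs :: "'d::finite \<Rightarrow> real^'n::finite"
  shows "inner (outer_prod us) (outer_prod xs) = (\<Prod>j\<in>UNIV. inner (us j) (xs j))"
proof -
  have "inner (outer_prod us) (outer_prod xs) = (\<Sum>f\<in>UNIV. \<Prod>j\<in>UNIV. us j $ f j * xs j $ f j)"
    by (simp add: inner_vec_def outer_nth prod.distrib)
  also have "\<dots> = (\<Prod>j\<in>UNIV. \<Sum>i\<in>UNIV. us j $ i * xs j $ i)"
    using prod_sum_PiE[of "UNIV::'d set" "\<lambda>_. UNIV::'n set" "\<lambda>j i. us j $ i * xs j $ i"] by simp
  also have "\<dots> = (\<Prod>j\<in>UNIV. inner (us j) (xs j))"
    by (simp add: inner_vec_def)
  finally show ?thesis .
qed

lemma norm_outer: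
  fixes xs :: "'d::finite \<Rightarrow> real^'n::finite"
  assumes "\<And>j. norm (xs j) = 1"
  shows "norm (outer_prod xs) = 1"
proof -
  have "\<And>j. inner (xs j) (xs j) = 1"
    using assms by (metis norm_eq_sqrt_inner real_sqrt_eq_1_iff)
  hence "inner (outer_prod xs) (outer_prod xs) = 1"
    by (simp add: inner_outer)
  thus ?thesis by (simp add: norm_eq_sqrt_inner)
qed

lemma subspace_sym: "subspace (sym_tensors :: ('n::finite,'d::finite) tensor set)"
  unfolding subspace_def sym_tensors_def by auto

lemma tp_sym:
  fixes x :: "real^'n::finite"
  shows "(tensor_power x :: ('n, 'd::finite) tensor) \<in> sym_tensors"
  unfolding sym_tensors_def tensor_power_def
proof (intro CollectI allI impI)
  fix \<pi> :: "'d::finite \<Rightarrow> 'd" and f :: "'d \<Rightarrow> 'n::finite" assume "bij \<pi>"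
  then show "outer_prod (\<lambda>_. x) $ (f \<circ> \<pi>) = outer_prod (\<lambda>_. x) $ f"
    using prod.reindex_bij_betw[of \<pi> UNIV UNIV "\<lambda>j. x $ f j"]
    by (simp add: outer_nth bij_betw_def)
qed

lemma sym_swap:
  assumes D: "D \<in> sym_tensors" and inv: "\<pi> \<circ> \<pi> = id"
  shows "(\<Sum>f\<in>UNIV. D $ f * G f) = (\<Sum>f\<in>UNIV. D $ f * G (f \<circ> \<pi>))"
proof -
  have b: "bij \<pi>" using inv by (metis o_bij)
  have "(\<Sum>f\<in>UNIV. D $ f * G f) = (\<Sum>f\<in>UNIV. D $ (f \<circ> \<pi>) * G (f \<circ> \<pi>))"
    by (rule sum.reindex_bij_witness[of _ "\<lambda>f. f \<circ> \<pi>" "\<lambda>f. f \<circ> \<pi>"])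
       (auto simp: comp_assoc inv)
  also have "\<dots> = (\<Sum>f\<in>UNIV. D $ f * G (f \<circ> \<pi>))"
    using D b by (simp add: sym_tensors_def)
  finally show ?thesis .
qed

definition v3 :: "'a \<Rightarrow> 'a \<Rightarrow> 'a \<Rightarrow> 3 \<Rightarrow> 'a" where
  "v3 x y z = (\<lambda>j. if j = 1 then x else if j = 2 then y else z)"

definition tri :: "('n::finite, 3) tensor \<Rightarrow> real^'n \<Rightarrow> real^'n \<Rightarrow> real^'n \<Rightarrow> real" where
  "tri D x y z = inner D (outer_prod (v3 x y z))"

lemma prod_3: "prod f (UNIV::3 set) = f 1 * f 2 * f 3"
  unfolding UNIV_3 by (simp add: ac_simps)

lemma v3_simps [simp]: "v3 x y z 1 = x" "v3 x y z 2 = y" "v3 x y z 3 = z"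
  by (simp_all add: v3_def)

lemma tri_expand: "tri D x y z = (\<Sum>f\<in>UNIV. D $ f * (x $ f 1 * y $ f 2 * z $ f 3))"
  by (simp add: tri_def inner_vec_def outer_nth prod_3)

lemma inner_outer_tri: "inner D (outer_prod xs) = tri D (xs 1) (xs 2) (xs 3)"
  by (simp add: tri_expand inner_vec_def outer_nth prod_3)

lemma inner_tp_tri: "inner D (tensor_power x) = tri D x x x"
  by (simp add: tensor_power_def inner_outer_tri)

lemma tri_tp: "tri (tensor_power v) x y z = inner v x * inner v y * inner v z"
  by (simp add: tri_def tensor_power_def inner_outer prod_3)



lemma tri_add1: "tri D (x + x') y z = tri D x y z + tri D x' y z"
  by (simp add: tri_expand distrib_left distrib_right sum.distrib)
lemma tri_add2: "tri D x (y + y') z = tri D x y z + tri D x y' z"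
  by (simp add: tri_expand distrib_left distrib_right sum.distrib)
lemma tri_add3: "tri D x y (z + z') = tri D x y z + tri D x y z'"
  by (simp add: tri_expand distrib_left distrib_right sum.distrib)
lemma tri_neg1: "tri D (-x) y z = - tri D x y z"
  by (simp add: tri_expand sum_negf)
lemma tri_neg2: "tri D x (-y) z = - tri D x y z"
  by (simp add: tri_expand sum_negf)
lemma tri_neg3: "tri D x y (-z) = - tri D x y z"
  by (simp add: tri_expand sum_negf)

lemma tri_diff1: "tri D (x - x') y z = tri D x y z - tri D x' y z"
  by (simp add: tri_expand left_diff_distrib right_diff_distrib sum_subtractf)
lemma tri_diff2: "tri D x (y - y') z = tri D x y z - tri D x y' z"
  by (simp add: tri_expand left_diff_distrib right_diff_distrib sum_subtractf)
lemma tri_diff3: "tri D x y (z - z') = tri D x y z - tri D x y z'"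
  by (simp add: tri_expand left_diff_distrib right_diff_distrib sum_subtractf)

definition sw12 :: "3 \<Rightarrow> 3" where "sw12 j = (if j = 1 then 2 else if j = 2 then 1 else j)"
definition sw23 :: "3 \<Rightarrow> 3" where "sw23 j = (if j = 2 then 3 else if j = 3 then 2 else j)"

lemma sw12_inv: "sw12 \<circ> sw12 = id"
  by (rule ext) (auto simp: sw12_def)
lemma sw23_inv: "sw23 \<circ> sw23 = id"
  by (rule ext) (auto simp: sw23_def)

lemma tri_sym12:
  assumes "D \<in> sym_tensors" shows "tri D x y z = tri D y x z"
  using sym_swap[OF assms sw12_inv, of "\<lambda>f. x $ f 1 * y $ f 2 * z $ f 3"]
  by (simp add: tri_expand sw12_def mult_ac)

lemma tri_sym23:
  assumes "D \<in> sym_tensors" shows "tri D x y z = tri D x z y"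
  using sym_swap[OF assms sw23_inv, of "\<lambda>f. x $ f 1 * y $ f 2 * z $ f 3"]
  by (simp add: tri_expand sw23_def mult_ac)

lemma sym_unique0:
  assumes D: "D \<in> sym_tensors" and Q: "\<And>x. tri D x x x = 0"
  shows "D = 0"
proof -
  have t1: "tri D x y y = 0" for x y
  proof -
    have "tri D (x + y) (x + y) (x + y) + tri D (x - y) (x - y) (x - y)
        = 2 * tri D x x x + 2 * (tri D x y y + tri D y x y + tri D y y x)"
      by (simp add: tri_add1 tri_add2 tri_add3 tri_diff1 tri_diff2 tri_diff3)
    moreover have "tri D y x y = tri D x y y" "tri D y y x = tri D x y y"
      using tri_sym12[OF D] tri_sym23[OF D] by metis+
    ultimately show ?thesis using Q[of "x+y"] Q[of "x - y"] Q[of x] by simp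
  qed
  have t2: "tri D x y z = 0" for x y z
  proof -
    have "tri D x (y + z) (y + z) = tri D x y y + tri D x z z + tri D x y z + tri D x z y"
      by (simp add: tri_add2 tri_add3)
    moreover have "tri D x z y = tri D x y z" using tri_sym23[OF D] by metis
    ultimately show ?thesis using t1[of x "y+z"] t1[of x y] t1[of x z] by simp
  qed
  show ?thesis
  proof (rule vec_eq_iff[THEN iffD2], intro allI)
    fix f :: "3 \<Rightarrow> 'a"
    have "tri D (axis (f 1) 1) (axis (f 2) 1) (axis (f 3) 1)
        = (\<Sum>g\<in>UNIV. if g = f then D $ g else 0)"
      unfolding tri_expand
    proof (rule sum.cong[OF refl])
      fix g :: "3 \<Rightarrow> 'a"
      have "(g = f) \<longleftrightarrow> (g 1 = f 1 \<and> g 2 = f 2 \<and> g 3 = f 3)"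
        by (metis ext exhaust_3)
      thus "D $ g * (axis (f 1) 1 $ g 1 * axis (f 2) 1 $ g 2 * axis (f 3) 1 $ g 3) =
            (if g = f then D $ g else 0)"
        by (auto simp: axis_def)
    qed
    thus "D $ f = 0 $ f" using t2 by simp
  qed
qed



definition unitfam :: "('d \<Rightarrow> real^'n::finite) \<Rightarrow> bool" where
  "unitfam xs \<longleftrightarrow> (\<forall>j. norm (xs j) = 1)"

lemma norm_outer_u: "unitfam xs \<Longrightarrow> norm (outer_prod xs) = 1"
  unfolding unitfam_def by (rule norm_outer) blast

lemma spec_bdd:
  fixes q :: "('n::finite,'d::finite) tensor"
  shows "bdd_above {inner q (outer_prod xs) | xs. \<forall>j. norm (xs j) = 1}"
proof (rule bdd_aboveI)
  fix y assume "y \<in> {inner q (outer_prod xs) | xs. \<forall>j. norm (xs j) = 1}"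
  then obtain xs where y: "y = inner q (outer_prod xs)" and u: "\<forall>j. norm (xs j) = 1" by blast
  have "y \<le> norm q * norm (outer_prod xs)" unfolding y by (rule norm_cauchy_schwarz)
  also have "\<dots> = norm q" by (simp add: norm_outer[OF u[rule_format]])
  finally show "y \<le> norm q" .
qed

lemma spec_upper:
  fixes q :: "('n::finite,'d::finite) tensor"
  assumes "unitfam xs" shows "inner q (outer_prod xs) \<le> spectral_norm q"
proof -
  have "\<forall>j. norm (xs j) = 1" using assms by (simp add: unitfam_def)
  hence "inner q (outer_prod xs) \<in> {inner q (outer_prod xs) | xs. \<forall>j. norm (xs j) = 1}" by blast
  thus ?thesis unfolding spectral_norm_def by (rule cSup_upper[OF _ spec_bdd])
qed

lemma spec_le:
  fixes q :: "('n::finite,'d::finite) tensor"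
  assumes "\<And>xs. unitfam xs \<Longrightarrow> inner q (outer_prod xs) \<le> M"
  shows "spectral_norm q \<le> M"
  unfolding spectral_norm_def
proof (rule cSup_least)
  let ?e = "\<lambda>_::'d. axis (undefined::'n) (1::real)"
  have "\<forall>j. norm (?e j) = 1" by simp
  hence "inner q (outer_prod ?e) \<in> {inner q (outer_prod xs) | xs. \<forall>j. norm (xs j) = 1}" by blast
  thus "{inner q (outer_prod xs) | xs. \<forall>j. norm (xs j) = 1} \<noteq> {}" by blast
next
  fix x assume "x \<in> {inner q (outer_prod xs) | xs. \<forall>j. norm (xs j) = 1}"
  then obtain xs where "x = inner q (outer_prod xs)" "\<forall>j. norm (xs j) = 1" by blast
  thus "x \<le> M" using assms[of xs] by (simp add: unitfam_def)
qed

lemma danskin: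
  fixes q :: "('n::finite,'d::finite) tensor" and S
  assumes vs: "unitfam vs"
    and max: "\<And>xs. unitfam xs \<Longrightarrow> inner q (outer_prod xs) \<le> inner q (outer_prod vs)"
    and t: "t > 0"
  shows "(spectral_norm has_derivative (\<lambda>h. inner (outer_prod vs) h)) (at (q + t *\<^sub>R outer_prod vs) within S)"
proof -
  define V where "V = outer_prod vs"
  define m where "m = inner q V"
  have nV: "norm V = 1" using norm_outer_u[OF vs] by (simp add: V_def)
  have VV: "inner V V = 1" using nV by (simp add: norm_eq_sqrt_inner)
  have low: "m + t + inner V h \<le> spectral_norm (q + t *\<^sub>R V + h)" for h
  proof -
    have "inner (q + t *\<^sub>R V + h) V \<le> spectral_norm (q + t *\<^sub>R V + h)"
      using spec_upper[OF vs] by (simp add: V_def)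
    moreover have "inner (q + t *\<^sub>R V + h) V = m + t + inner V h"
      by (simp add: inner_add_left inner_add_right m_def VV inner_commute)
    ultimately show ?thesis by simp
  qed
  have up: "spectral_norm (q + t *\<^sub>R V + h) \<le> m + t + inner V h + (norm h)^2 / (2*t)" for h
  proof (rule spec_le)
    fix xs :: "'d \<Rightarrow> real^'n" assume u: "unitfam xs"
    define X where "X = outer_prod xs"
    have nX: "norm X = 1" using norm_outer_u[OF u] by (simp add: X_def)
    define d where "d = norm (X - V)"
    have XX: "inner X X = 1" using nX by (simp add: norm_eq_sqrt_inner)
    have d2: "d^2 = 2 - 2 * inner V X"
    proof -
      have "d^2 = inner (X - V) (X - V)" by (simp add: d_def power2_norm_eq_inner)
      also have "\<dots> = inner X X + inner V V - 2 * inner V X"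
        by (simp add: inner_diff_left inner_diff_right inner_commute)
      finally show ?thesis using XX VV by simp
    qed
    have qX: "inner q X \<le> m" using max[OF u] by (simp add: X_def V_def m_def)
    have hX: "inner h X \<le> inner h V + norm h * d"
    proof -
      have "inner h (X - V) \<le> norm h * d" unfolding d_def by (rule norm_cauchy_schwarz)
      thus ?thesis by (simp add: inner_diff_right)
    qed
    have sq: "0 \<le> (t * d - norm h)^2" by simp
    have key: "t * inner V X + norm h * d \<le> t + (norm h)^2 / (2*t)"
    proof -
      have "inner V X = 1 - d^2 / 2" unfolding d2 by (simp add: diff_divide_distrib)
      hence "t * inner V X = t - t * d^2 / 2" by (simp add: right_diff_distrib)
      moreover have "norm h * d \<le> t * d^2 / 2 + (norm h)^2 / (2*t)"
      proof -
        have "2 * t * (norm h * d) \<le> t^2 * d^2 + (norm h)^2"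
          using sq by (simp add: power2_diff power_mult_distrib algebra_simps)
        thus ?thesis using t by (simp add: field_simps power2_eq_square)
      qed
      ultimately show ?thesis by linarith
    qed
    have "inner (q + t *\<^sub>R V + h) X = inner q X + t * inner V X + inner h X"
      by (simp add: inner_add_left)
    also have "\<dots> \<le> m + t + inner V h + (norm h)^2 / (2*t)"
      using qX hX key by (simp add: inner_commute)
    finally show "inner (q + t *\<^sub>R V + h) (outer_prod xs) \<le> m + t + inner V h + (norm h)^2 / (2*t)"
      by (simp add: X_def)
  qed
  have g0: "spectral_norm (q + t *\<^sub>R V) = m + t"
    using low[of 0] up[of 0] by simp
  show ?thesis
    unfolding V_def[symmetric]
  proof (subst has_derivative_within_alt, intro conjI allI impI)
    show "bounded_linear (inner V)" by (rule bounded_linear_inner_right)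
    fix e :: real assume e: "e > 0"
    show "\<exists>d>0. \<forall>y\<in>S. norm (y - (q + t *\<^sub>R V)) < d \<longrightarrow>
      norm (spectral_norm y - spectral_norm (q + t *\<^sub>R V) - inner V (y - (q + t *\<^sub>R V)))
        \<le> e * norm (y - (q + t *\<^sub>R V))"
    proof (intro exI[of _ "2*t*e"] conjI ballI impI)
      show "0 < 2*t*e" using t e by simp
      fix y assume y: "norm (y - (q + t *\<^sub>R V)) < 2*t*e"
      define h where "h = y - (q + t *\<^sub>R V)"
      have yh: "y = q + t *\<^sub>R V + h" by (simp add: h_def)
      have a: "0 \<le> spectral_norm y - spectral_norm (q + t *\<^sub>R V) - inner V h"
        using low[of h] g0 yh by simp
      have b: "spectral_norm y - spectral_norm (q + t *\<^sub>R V) - inner V h \<le> (norm h)^2 / (2*t)"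
        using up[of h] g0 yh by simp
      have c: "(norm h)^2 / (2*t) \<le> e * norm h"
      proof -
        have "norm h * norm h \<le> (2*t*e) * norm h"
          using y h_def by (intro mult_right_mono) auto
        thus ?thesis using t by (simp add: field_simps power2_eq_square)
      qed
      show "norm (spectral_norm y - spectral_norm (q + t *\<^sub>R V) - inner V (y - (q + t *\<^sub>R V)))
        \<le> e * norm (y - (q + t *\<^sub>R V))"
        using a b c by (simp add: h_def[symmetric])
    qed
  qed
qed



lemma tri_addD: "tri (A + B) x y z = tri A x y z + tri B x y z"
  by (simp add: tri_def inner_add_left)
lemma tri_scaleD: "tri (c *\<^sub>R A) x y z = c * tri A x y z"
  by (simp add: tri_def)
lemma tri_sumD: "tri (\<Sum>i\<in>I. F i) x y z = (\<Sum>i\<in>I. tri (F i) x y z)"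
  by (simp add: tri_def inner_sum_left)

definition ee :: "'n::finite \<Rightarrow> real^'n" where "ee i0 = axis i0 1"
definition mu :: "'n::finite \<Rightarrow> 'n \<Rightarrow> real^'n" where
  "mu i0 i = (-1/2) *\<^sub>R axis i0 1 + (- sqrt 3 / 2) *\<^sub>R axis i 1"
definition ww :: "'n::finite \<Rightarrow> 'n \<Rightarrow> real^'n" where
  "ww i0 i = (-1/2) *\<^sub>R axis i0 1 + (sqrt 3 / 2) *\<^sub>R axis i 1"

definition A0 :: "'n::finite \<Rightarrow> ('n, 3) tensor" where
  "A0 i0 = ((real CARD('n) + 2) / 3) *\<^sub>R tensor_power (ee i0)
     + (4/3) *\<^sub>R (\<Sum>i\<in>UNIV - {i0}. tensor_power (mu i0 i) + tensor_power (ww i0 i))"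

lemma s3: "sqrt 3 * sqrt 3 = (3::real)" "sqrt 3 * (sqrt 3 * x) = 3 * (x::real)"
  by simp_all

lemma pair_tri:
  "tri (tensor_power (mu i0 i)) x y z + tri (tensor_power (ww i0 i)) x y z
   = - (x$i0*y$i0*z$i0) / 4 - 3/4 * (x$i0*y$i*z$i + x$i*y$i0*z$i + x$i*y$i*z$i0)"
  by (simp add: tri_tp mu_def ww_def inner_add_left inner_axis' algebra_simps s3)

lemma card_U: "real (card (UNIV - {i0::'n::finite})) = real CARD('n) - 1"
  by (simp add: card_Diff_singleton of_nat_diff)

lemma arith1: "(N + 2) / 3 * c + 4/3 * (- (N - 1) * c / 4 - 3/4 * S) = c - (S::real)"
  by (simp add: field_simps)

lemma tri_A0:
  fixes i0 :: "'n::finite"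
  shows "tri (A0 i0) x y z = x$i0*y$i0*z$i0
     - (\<Sum>i\<in>UNIV - {i0}. x$i0*y$i*z$i + x$i*y$i0*z$i + x$i*y$i*z$i0)"
proof -
  let ?U = "UNIV - {i0}"
  let ?P = "\<lambda>i. x$i0*y$i*z$i + x$i*y$i0*z$i + x$i*y$i*z$i0"
  have "tri (A0 i0) x y z = (real CARD('n) + 2) / 3 * (x$i0*y$i0*z$i0)
      + 4/3 * (\<Sum>i\<in>?U. - (x$i0*y$i0*z$i0) / 4 - 3/4 * ?P i)"
    unfolding A0_def tri_addD tri_scaleD tri_sumD pair_tri
    by (simp add: tri_tp ee_def inner_axis')
  also have "(\<Sum>i\<in>?U. - (x$i0*y$i0*z$i0) / 4 - 3/4 * ?P i)
      = - (real CARD('n) - 1) * (x$i0*y$i0*z$i0) / 4 - 3/4 * (\<Sum>i\<in>?U. ?P i)"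
    by (simp only: sum_subtractf sum_constant sum_distrib_left[symmetric] scaleR_conv_of_real card_U)
  also have "(real CARD('n) + 2) / 3 * (x$i0*y$i0*z$i0) + 4/3 * (- (real CARD('n) - 1) * (x$i0*y$i0*z$i0) / 4 - 3/4 * (\<Sum>i\<in>?U. ?P i))
     = x$i0*y$i0*z$i0 - (\<Sum>i\<in>?U. ?P i)"
    by (rule arith1)
  finally show ?thesis .
qed

lemma A0_sym:
  fixes i0 :: "'n::finite"
  shows "A0 i0 \<in> sym_tensors"
  unfolding A0_def
  by (intro subspace_add[OF subspace_sym] subspace_scale[OF subspace_sym]
        subspace_sum[OF subspace_sym] tp_sym)

lemma A0_Ch:
  fixes i0 :: "'n::finite"
  shows "inner (A0 i0) (tensor_power x) = Ch3 i0 x"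
  by (simp add: inner_tp_tri tri_A0 Ch3_def sum_distrib_left power2_eq_square power3_eq_cube
       algebra_simps)



lemma sum_split_i0:
  fixes f :: "'n::finite \<Rightarrow> real"
  shows "(\<Sum>j\<in>UNIV. f j) = f i0 + (\<Sum>j\<in>UNIV - {i0}. f j)"
  by (simp add: sum.remove)

lemma normsq_split:
  fixes x :: "real^'n::finite"
  shows "(norm x)^2 = (x$i0)^2 + (\<Sum>j\<in>UNIV - {i0}. (x$j)^2)"
proof -
  have "(norm x)^2 = inner x x" by (rule power2_norm_eq_inner)
  also have "\<dots> = (\<Sum>j\<in>UNIV. (x$j)^2)" by (simp add: inner_vec_def power2_eq_square)
  finally show ?thesis by (simp add: sum_split_i0[of _ i0])
qed

lemma tri_A0_bound:
  fixes i0 :: "'n::finite"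
  shows "tri (A0 i0) x y z \<le> norm x * norm y * norm z"
proof -
  let ?U = "UNIV - {i0}"
  define S where "S = (\<Sum>j\<in>?U. x$j * y$j)"
  define X2 where "X2 = (\<Sum>j\<in>?U. (x$j)^2)"
  define Y2 where "Y2 = (\<Sum>j\<in>?U. (y$j)^2)"
  define mv :: "real^'n" where
    "mv = (\<chi> j. if j = i0 then x$i0 * y$i0 - S else - (y$i0 * x$j + x$i0 * y$j))"
  have T: "tri (A0 i0) x y z = inner z mv"
  proof -
    have "inner z mv = z$i0 * (x$i0 * y$i0 - S) + (\<Sum>j\<in>?U. z$j * (- (y$i0 * x$j + x$i0 * y$j)))"
    proof -
      have "(\<Sum>j\<in>?U. z$j * mv$j) = (\<Sum>j\<in>?U. z$j * (- (y$i0 * x$j + x$i0 * y$j)))"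
        by (rule sum.cong) (auto simp: mv_def)
      thus ?thesis by (simp add: inner_vec_def sum_split_i0[of _ i0] mv_def)
    qed
    also have "\<dots> = x$i0*y$i0*z$i0
     - (\<Sum>i\<in>?U. x$i0*y$i*z$i + x$i*y$i0*z$i + x$i*y$i*z$i0)"
      by (simp add: S_def sum_distrib_left sum.distrib sum_negf sum_subtractf algebra_simps)
    finally show ?thesis by (simp add: tri_A0)
  qed
  have nx: "(norm x)^2 = (x$i0)^2 + X2" by (simp add: X2_def normsq_split[of _ i0])
  have ny: "(norm y)^2 = (y$i0)^2 + Y2" by (simp add: Y2_def normsq_split[of _ i0])
  have W: "(\<Sum>j\<in>?U. (- (y$i0 * x$j + x$i0 * y$j))^2) = (y$i0)^2 * X2 + 2 * x$i0 * y$i0 * S + (x$i0)^2 * Y2"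
    by (simp add: X2_def Y2_def S_def power2_eq_square sum_distrib_left sum.distrib algebra_simps)
  have nm: "(norm mv)^2 = (x$i0 * y$i0 - S)^2 + (\<Sum>j\<in>?U. (- (y$i0 * x$j + x$i0 * y$j))^2)"
  proof -
    have "(\<Sum>j\<in>?U. (mv$j)^2) = (\<Sum>j\<in>?U. (- (y$i0 * x$j + x$i0 * y$j))^2)"
      by (rule sum.cong) (auto simp: mv_def)
    thus ?thesis by (simp add: normsq_split[of _ i0] mv_def)
  qed
  have CS: "S^2 \<le> X2 * Y2"
    unfolding S_def X2_def Y2_def by (rule Cauchy_Schwarz_ineq_sum)
  have "(norm mv)^2 \<le> ((norm x) * (norm y))^2"
    unfolding nm W power_mult_distrib nx ny using CS
    by (simp add: power2_diff power_mult_distrib algebra_simps)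
  hence m: "norm mv \<le> norm x * norm y"
    by (rule power2_le_imp_le) simp
  have "inner z mv \<le> norm z * norm mv" by (rule norm_cauchy_schwarz)
  also have "\<dots> \<le> norm z * (norm x * norm y)" by (rule mult_left_mono[OF m]) simp
  finally show ?thesis using T by (simp add: mult_ac)
qed



lemma norm_ee: "norm (ee i0) = 1" by (simp add: ee_def)

lemma norm_mu:
  fixes i0 :: "'n::finite" assumes "i \<noteq> i0" shows "norm (mu i0 i) = 1"
proof -
  have "inner (mu i0 i) (mu i0 i) = 1"
    using assms by (simp add: mu_def inner_add_left inner_add_right inner_axis_axis s3 algebra_simps)
  thus ?thesis by (simp add: norm_eq_sqrt_inner)
qed

lemma norm_ww:
  fixes i0 :: "'n::finite" assumes "i \<noteq> i0" shows "norm (ww i0 i) = 1"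
proof -
  have "inner (ww i0 i) (ww i0 i) = 1"
    using assms by (simp add: ww_def inner_add_left inner_add_right inner_axis_axis s3 algebra_simps)
  thus ?thesis by (simp add: norm_eq_sqrt_inner)
qed

lemma Ch_ee: "Ch3 i0 (ee i0) = 1"
  by (simp add: Ch3_def ee_def axis_def)

lemma Ch_mu:
  fixes i0 :: "'n::finite" assumes "i \<noteq> i0" shows "Ch3 i0 (mu i0 i) = 1"
proof -
  have "(\<Sum>j\<in>UNIV - {i0}. (mu i0 i $ j)^2) = (\<Sum>j\<in>UNIV - {i0}. if j = i then 3/4 else 0)"
    by (rule sum.cong) (auto simp: mu_def axis_def power2_eq_square s3)
  also have "\<dots> = 3/4" using assms by simp
  finally have se: "(\<Sum>j\<in>UNIV - {i0}. (mu i0 i $ j)^2) = 3/4" .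
  have "mu i0 i $ i0 = -1/2" using assms by (simp add: mu_def axis_def)
  thus ?thesis unfolding Ch3_def se by (simp add: power3_eq_cube)
qed

lemma Ch_ww:
  fixes i0 :: "'n::finite" assumes "i \<noteq> i0" shows "Ch3 i0 (ww i0 i) = 1"
proof -
  have "(\<Sum>j\<in>UNIV - {i0}. (ww i0 i $ j)^2) = (\<Sum>j\<in>UNIV - {i0}. if j = i then 3/4 else 0)"
    by (rule sum.cong) (auto simp: ww_def axis_def power2_eq_square s3)
  also have "\<dots> = 3/4" using assms by simp
  finally have se: "(\<Sum>j\<in>UNIV - {i0}. (ww i0 i $ j)^2) = 3/4" .
  have "ww i0 i $ i0 = -1/2" using assms by (simp add: ww_def axis_def)
  thus ?thesis unfolding Ch3_def se by (simp add: power3_eq_cube)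
qed

lemma A0_nz: "A0 i0 \<noteq> 0"
  using A0_Ch[of i0 "ee i0"] Ch_ee[of i0] by auto

lemma A0_unique:
  fixes i0 :: "'n::finite"
  assumes "A \<in> sym_tensors" "\<forall>x. inner A (tensor_power x) = Ch3 i0 x"
  shows "A = A0 i0"
proof -
  have "A - A0 i0 = 0"
  proof (rule sym_unique0)
    show "A - A0 i0 \<in> sym_tensors" using assms(1) A0_sym subspace_diff[OF subspace_sym] by blast
    fix x show "tri (A - A0 i0) x x x = 0"
    proof -
      have "tri (A - A0 i0) x x x = inner (A - A0 i0) (tensor_power x)" by (simp add: inner_tp_tri)
      thus ?thesis using assms(2) A0_Ch[of i0 x] by (simp add: inner_diff_left)
    qed
  qed
  thus ?thesis by simp
qed



definition Lset :: "'n::finite \<Rightarrow> ('n,3) tensor set" where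
  "Lset i0 = {v. \<exists>ps vs. (\<forall>i. ps i \<in> sym_tensors \<and> vs i \<in> sym_tensors \<and>
                        (spectral_norm has_derivative (\<lambda>h. inner (vs i) h)) (at (ps i) within sym_tensors))
               \<and> ps \<longlonglongrightarrow> (A0 i0 /\<^sub>R norm (A0 i0)) \<and> vs \<longlonglongrightarrow> v}"

lemma max_in_L:
  fixes i0 :: "'n::finite"
  assumes nv: "norm v = 1" and val: "Ch3 i0 v = 1"
  shows "tensor_power v \<in> Lset i0"
proof -
  define p where "p = A0 i0 /\<^sub>R norm (A0 i0)"
  define V :: "('n,3) tensor" where "V = tensor_power v"
  have uv: "unitfam (\<lambda>_::3. v)" using nv by (simp add: unitfam_def)
  have nA: "norm (A0 i0) > 0" using A0_nz by simp
  have AV: "inner (A0 i0) V = 1" using A0_Ch[of i0 v] val by (simp add: V_def)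
  have maxh: "inner p (outer_prod xs) \<le> inner p (outer_prod (\<lambda>_. v))" if u: "unitfam xs" for xs
  proof -
    have "inner (A0 i0) (outer_prod xs) \<le> 1"
      using tri_A0_bound[of i0 "xs 1" "xs 2" "xs 3"] u
      by (simp add: inner_outer_tri unitfam_def)
    hence "inner (A0 i0) (outer_prod xs) / norm (A0 i0) \<le> 1 / norm (A0 i0)"
      using nA by (simp add: divide_right_mono)
    thus ?thesis using AV by (simp add: p_def V_def tensor_power_def divide_inverse mult.commute)
  qed
  define ps where "ps = (\<lambda>k::nat. p + inverse (real (Suc k)) *\<^sub>R V)"
  have symp: "p \<in> sym_tensors" unfolding p_def
    by (rule subspace_scale[OF subspace_sym A0_sym])
  have symV: "V \<in> sym_tensors" unfolding V_def by (rule tp_sym)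
  have "\<forall>k. ps k \<in> sym_tensors \<and> V \<in> sym_tensors \<and>
      (spectral_norm has_derivative (\<lambda>h. inner V h)) (at (ps k) within sym_tensors)"
  proof
    fix k
    have "(spectral_norm has_derivative (\<lambda>h. inner (outer_prod (\<lambda>_. v)) h))
            (at (p + inverse (real (Suc k)) *\<^sub>R outer_prod (\<lambda>_. v)) within sym_tensors)"
      by (rule danskin[OF uv maxh]) simp_all
    thus "ps k \<in> sym_tensors \<and> V \<in> sym_tensors \<and>
      (spectral_norm has_derivative (\<lambda>h. inner V h)) (at (ps k) within sym_tensors)"
      using symp symV
      by (simp add: ps_def V_def tensor_power_def subspace_add[OF subspace_sym] subspace_scale[OF subspace_sym])
  qed
  moreover have "ps \<longlonglongrightarrow> p"
  proof -
    have "(\<lambda>k. p + inverse (real (Suc k)) *\<^sub>R V) \<longlonglongrightarrow> p + 0 *\<^sub>R V"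
      by (intro tendsto_add tendsto_const tendsto_scaleR LIMSEQ_inverse_real_of_nat)
    thus ?thesis by (simp add: ps_def)
  qed
  ultimately have "V \<in> Lset i0"
    unfolding Lset_def p_def[symmetric] by (intro CollectI exI[of _ ps] exI[of _ "\<lambda>_. V"]) auto
  thus ?thesis by (simp add: V_def)
qed



lemma cube_pair: "- (((a + sqrt 3 * p) / 2) ^ 3) + ((- a + sqrt 3 * p) / 2) ^ 3
   = - (a^3) / 4 - 9/4 * a * p^2"
proof -
  have s33: "sqrt 3 ^ 3 = 3 * sqrt (3::real)"
    by (simp add: power3_eq_cube)
  show ?thesis by (simp add: power3_eq_cube power2_eq_square algebra_simps s3 field_simps)
qed

lemma aux_div: "p / d * y + c / d * z = (p * y + c * z) / (d::real)"
  by (simp add: add_divide_distrib)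

lemma arith2:
  assumes "N \<ge> (2::real)"
  shows "(a^3 - 3 * a * S) / (3 * N - 2) =
     (N + 2) / (9 * N - 6) * a ^ 3 + 4 / (9 * N - 6) * (- (N - 1) * a^3 / 4 - 9/4 * a * S)"
proof -
  have D: "3 * N - 2 > 0" using assms by auto
  have "(N + 2) / (9 * N - 6) * a ^ 3 + 4 / (9 * N - 6) * (- (N - 1) * a^3 / 4 - 9/4 * a * S)
      = ((N + 2) * a ^ 3 + 4 * (- (N - 1) * a^3 / 4 - 9/4 * a * S)) / (9 * N - 6)"
    by (rule aux_div)
  also have "(N + 2) * a ^ 3 + 4 * (- (N - 1) * a^3 / 4 - 9/4 * a * S) = 3 * (a^3 - 3 * a * S)"
    by (simp add: field_simps)
  also have "3 * (a^3 - 3 * a * S) / (9 * N - 6) = (a^3 - 3 * a * S) / (3 * N - 2)"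
  proof -
    have e: "9 * N - 6 = 3 * (3 * N - 2)" by simp
    show ?thesis unfolding e by (rule mult_divide_mult_cancel_left) simp
  qed
  finally show ?thesis by simp
qed

lemma ident:
  fixes i0 :: "'n::finite" and x :: "real^'n"
  assumes "CARD('n) \<ge> 2"
  shows "Ch3 i0 x / (3 * real CARD('n) - 2) =
              (real CARD('n) + 2) / (9 * real CARD('n) - 6) * x $ i0 ^ 3
              + 4 / (9 * real CARD('n) - 6) * (\<Sum>i\<in>UNIV - {i0}.
                   (- (((x $ i0 + sqrt 3 * x $ i) / 2) ^ 3) + ((- (x $ i0) + sqrt 3 * x $ i) / 2) ^ 3))"
proof -
  let ?U = "UNIV - {i0}"
  have N: "real CARD('n) \<ge> 2" using assms by simp
  have "(\<Sum>i\<in>?U. (- (((x $ i0 + sqrt 3 * x $ i) / 2) ^ 3) + ((- (x $ i0) + sqrt 3 * x $ i) / 2) ^ 3))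
     = (\<Sum>i\<in>?U. - ((x$i0)^3) / 4 - 9/4 * x$i0 * (x$i)^2)"
    by (simp only: cube_pair)
  also have "\<dots> = - (real CARD('n) - 1) * ((x$i0)^3) / 4 - 9/4 * x$i0 * (\<Sum>i\<in>?U. (x$i)^2)"
    by (simp only: sum_subtractf sum_constant sum_distrib_left[symmetric] card_U)
  finally show ?thesis
    unfolding Ch3_def using arith2[OF N, of "x$i0" "\<Sum>i\<in>?U. (x$i)^2"] by simp
qed



lemma clarke_A0:
  fixes i0 :: "'n::finite"
  assumes "CARD('n) \<ge> 2"
  shows "(1 / (3 * real CARD('n) - 2)) *\<^sub>R A0 i0
          \<in> clarke_grad_on sym_tensors spectral_norm (A0 i0 /\<^sub>R norm (A0 i0))"
proof -
  let ?U = "UNIV - {i0}"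
  define N where "N = real CARD('n)"
  have N2: "N \<ge> 2" using assms by (simp add: N_def)
  define H where "H = convex hull (Lset i0)"
  have H_eq: "clarke_grad_on sym_tensors spectral_norm (A0 i0 /\<^sub>R norm (A0 i0)) = H"
    by (simp add: H_def clarke_grad_on_def Lset_def)
  have cH: "convex H" unfolding H_def by (rule convex_convex_hull)
  have LH: "Lset i0 \<subseteq> H" unfolding H_def by (rule hull_subset)
  define E :: "('n,3) tensor" where "E = tensor_power (ee i0)"
  define M :: "'n \<Rightarrow> ('n,3) tensor" where "M = (\<lambda>i. tensor_power (mu i0 i))"
  define W :: "'n \<Rightarrow> ('n,3) tensor" where "W = (\<lambda>i. tensor_power (ww i0 i))"
  have EH: "E \<in> H" using LH max_in_L[OF norm_ee Ch_ee] by (auto simp: E_def)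
  have MH: "M i \<in> H" if "i \<in> ?U" for i
    using that LH max_in_L[OF norm_mu Ch_mu, of i i0] by (auto simp: M_def)
  have WH: "W i \<in> H" if "i \<in> ?U" for i
    using that LH max_in_L[OF norm_ww Ch_ww, of i i0] by (auto simp: W_def)
  define Mid where "Mid = (\<lambda>i. (1/2) *\<^sub>R M i + (1/2) *\<^sub>R W i)"
  have MidH: "Mid i \<in> H" if "i \<in> ?U" for i
    unfolding Mid_def by (rule convexD[OF cH MH[OF that] WH[OF that]]) auto
  have cardU: "real (card ?U) = N - 1" by (simp add: card_U N_def)
  define Mbar where "Mbar = (\<Sum>i\<in>?U. (1 / (N - 1)) *\<^sub>R Mid i)"
  have MbarH: "Mbar \<in> H"
    unfolding Mbar_def
  proof (rule convex_sum[OF _ cH])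
    show "(\<Sum>i\<in>?U. 1 / (N - 1)) = 1" using cardU N2 by simp
  qed (use N2 MidH in auto)
  define lam where "lam = (N + 2) / (3 * (3 * N - 2))"
  have lam01: "0 \<le> lam" "lam \<le> 1" using N2 by (auto simp: lam_def field_simps)
  have nz: "N - 1 \<noteq> 0" "3 * N - 2 \<noteq> 0" "3 * (3 * N - 2) \<noteq> 0" using N2 by auto
  have "1 - lam = (8 * (N - 1)) / (3 * (3 * N - 2))"
    using nz by (simp add: lam_def field_simps)
  hence coef: "(1 - lam) * (1 / (N - 1)) * (1/2) = 1 / (3 * N - 2) * (4/3)"
    using nz by (simp add: field_simps)
  have coefE: "1 / (3 * N - 2) * ((N + 2) / 3) = lam"
    using N2 by (simp add: lam_def field_simps)
  have "(1 - lam) *\<^sub>R Mbar = (\<Sum>i\<in>?U. ((1 - lam) * (1 / (N - 1)) * (1/2)) *\<^sub>R (M i + W i))"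
    by (simp add: Mbar_def Mid_def scaleR_sum_right scaleR_add_right)
  also have "\<dots> = (1 / (3 * N - 2) * (4/3)) *\<^sub>R (\<Sum>i\<in>?U. M i + W i)"
    by (simp only: coef scaleR_sum_right)
  finally have eqM: "(1 - lam) *\<^sub>R Mbar = (1 / (3 * N - 2) * (4/3)) *\<^sub>R (\<Sum>i\<in>?U. M i + W i)" .
  have "(1 / (3 * N - 2)) *\<^sub>R A0 i0 = (1 / (3 * N - 2) * ((N + 2) / 3)) *\<^sub>R E
          + (1 / (3 * N - 2) * (4/3)) *\<^sub>R (\<Sum>i\<in>?U. M i + W i)"
    by (simp add: A0_def N_def E_def M_def W_def scaleR_add_right)
  also have "\<dots> = lam *\<^sub>R E + (1 - lam) *\<^sub>R Mbar"
    by (simp only: coefE eqM)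
  finally have eqA: "(1 / (3 * N - 2)) *\<^sub>R A0 i0 = lam *\<^sub>R E + (1 - lam) *\<^sub>R Mbar" .
  have "lam *\<^sub>R E + (1 - lam) *\<^sub>R Mbar \<in> H"
    by (rule convexD[OF cH EH MbarH]) (use lam01 in auto)
  thus ?thesis using eqA H_eq by (simp add: N_def)
qed

theorem corollary1p13:
  fixes i0 :: "'n::finite"
  assumes "CARD('n) \<ge> 2"
  shows "(\<forall>x::real^'n. let n = real CARD('n) in
            Ch3 i0 x / (3 * n - 2) =
              (n + 2) / (9 * n - 6) * x $ i0 ^ 3
              + 4 / (9 * n - 6) * (\<Sum>i\<in>UNIV - {i0}.
                   (- (((x $ i0 + sqrt 3 * x $ i) / 2) ^ 3) + ((- (x $ i0) + sqrt 3 * x $ i) / 2) ^ 3)))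
       \<and> (\<exists>A::('n, 3) tensor. A \<in> sym_tensors \<and> (\<forall>x. inner A (tensor_power x) = Ch3 i0 x))
       \<and> (\<forall>A::('n, 3) tensor. A \<in> sym_tensors \<and> (\<forall>x. inner A (tensor_power x) = Ch3 i0 x)
             \<longrightarrow> critical_sym A)"
proof (intro conjI allI impI)
  fix x :: "real^'n"
  show "let n = real CARD('n) in
            Ch3 i0 x / (3 * n - 2) =
              (n + 2) / (9 * n - 6) * x $ i0 ^ 3
              + 4 / (9 * n - 6) * (\<Sum>i\<in>UNIV - {i0}.
                   (- (((x $ i0 + sqrt 3 * x $ i) / 2) ^ 3) + ((- (x $ i0) + sqrt 3 * x $ i) / 2) ^ 3))"
    unfolding Let_def by (rule ident[OF assms])
next
  show "\<exists>A::('n, 3) tensor. A \<in> sym_tensors \<and> (\<forall>x. inner A (tensor_power x) = Ch3 i0 x)"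
    using A0_sym[of i0] A0_Ch[of i0] by blast
next
  fix A :: "('n, 3) tensor"
  assume h: "A \<in> sym_tensors \<and> (\<forall>x. inner A (tensor_power x) = Ch3 i0 x)"
  hence AA: "A = A0 i0" using A0_unique by blast
  show "critical_sym A"
    unfolding critical_sym_def AA
    using A0_sym[of i0] A0_nz[of i0] clarke_A0[OF assms, of i0] by blast
qed


end
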